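(* Let $\mu(t)=1-3t+t^2$, $\rho(t)=1-t+t^2$, $\mu_0=(3-\sqrt5)/2$ (the zero of $\mu$ in $(0,1)$), and define polynomials $g_k(t)$ by $g_1=1$, $g_2=1-10t+19t^2-10t^3+t^4$, and for $m\ge1$ $$g_{2m+1}=2g_{2m}-\rho^2g_{2m-1},\qquad g_{2m+2}=2\mu^2g_{2m+1}-\rho^2g_{2m}.$$ Then for every $m\ge1$: $g_{2m-1}$ has exactly $2(m-1)$ zeros $\alpha_1<\dots<\alpha_{2(m-1)}$ in $[0,1]$, $g_{2m}$ has exactly $2m$ zeros $\beta_1<\dots<\beta_{2m}$ in $[0,1]$, $g_{2m+1}$ has exactly $2m$ zeros $\gamma_1<\dots<\gamma_{2m}$ in $[0,1]$; the products $g_{2m-1}g_{2m}$ and $g_{2m}g_{2m+1}$ have no repeated zeros; and $$\beta_1<\alpha_1<\beta_2<\dots<\alpha_{m-1}<\beta_m<\mu_0<\beta_{m+1}<\alpha_m<\dots<\alpha_{2(m-1)}<\beta_{2m}<1,$$ $$\gamma_1<\beta_1<\gamma_2<\dots<\gamma_m<\beta_m<\mu_0<\beta_{m+1}<\gamma_{m+1}<\dots<\beta_{2m}<\gamma_{2m}<1.$$ (Equivalently, $(t-1)\mu(t)g_{2m-1}$ and $g_{2m}$ are interlaced on $[0,1]$, and $(t-1)g_{2m}$ and $\mu(t)g_{2m+1}$ are interlaced on $[0,1]$.)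
   Context: These $g_k$ arise as factors of the normalized Alexander polynomials of a family of alternating quasi-rational knots $Y_k$; the statement is purely about the polynomials defined by the recursion. *)

theory Defs
  imports "HOL-Computational_Algebra.Polynomial"
begin

definition mu_poly :: "real poly" where "mu_poly = [:1, -3, 1:]"
definition rho_poly :: "real poly" where "rho_poly = [:1, -1, 1:]"
definition mu0 :: real where "mu0 = (3 - sqrt 5) / 2"

text \<open>gpoly k is g_k for k \<ge> 1; gpoly 0 is an irrelevant dummy value.\<close>
fun gpoly :: "nat \<Rightarrow> real poly" where
  "gpoly 0 = 0"
| "gpoly (Suc 0) = 1"
| "gpoly (Suc (Suc 0)) = [:1, -10, 19, -10, 1:]"
| "gpoly (Suc (Suc (Suc k))) =
     (if even k
      then 2 * gpoly (Suc (Suc k)) - rho_poly ^ 2 * gpoly (Suc k)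
      else 2 * mu_poly ^ 2 * gpoly (Suc (Suc k)) - rho_poly ^ 2 * gpoly (Suc k))"

definition zeros01 :: "real poly \<Rightarrow> real set" where
  "zeros01 p = {t. 0 \<le> t \<and> t \<le> 1 \<and> poly p t = 0}"

end

theory Submission
  imports Defs
begin

definition rho :: "real \<Rightarrow> real" where "rho t = poly rho_poly t"
definition mu :: "real \<Rightarrow> real" where "mu t = poly mu_poly t"
definition xf :: "real \<Rightarrow> real" where "xf t = mu t / rho t"
definition psi :: "real \<Rightarrow> real" where "psi t = arccos (xf t)"
definition W :: "nat \<Rightarrow> real \<Rightarrow> real" where "W n t = rho t ^ n * cos (real n * psi t)"

lemma rho_eq: "rho t = 1 - t + t^2" by (simp add: rho_def rho_poly_def power2_eq_square algebra_simps)
lemma mu_eq: "mu t = 1 - 3*t + t^2" by (simp add: mu_def mu_poly_def power2_eq_square algebra_simps)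

lemma rho_pos: "rho t > 0"
proof -
  have "rho t = (t - 1/2)^2 + 3/4" by (simp add: rho_eq power2_eq_square algebra_simps)
  moreover have "(t - 1/2)^2 \<ge> 0" by simp
  ultimately show ?thesis by linarith
qed

lemma xf_bounds: assumes "t \<ge> 0" shows "-1 \<le> xf t" "xf t \<le> 1"
proof -
  have r: "rho t > 0" by (rule rho_pos)
  have "mu t \<le> rho t" using assms by (simp add: mu_eq rho_eq)
  thus "xf t \<le> 1" using r by (simp add: xf_def)
  have "mu t + rho t = 2*(1-t)^2" by (simp add: mu_eq rho_eq power2_eq_square algebra_simps)
  moreover have "(1-t)^2 \<ge> 0" by simp
  ultimately have "-rho t \<le> mu t" by linarith
  thus "-1 \<le> xf t" using r by (simp add: xf_def field_simps)
qed

lemma cos_psi: "t \<ge> 0 \<Longrightarrow> cos (psi t) = xf t"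
  using xf_bounds cos_arccos psi_def by auto

lemma rho_cos_psi: "t \<ge> 0 \<Longrightarrow> rho t * cos (psi t) = mu t"
  using cos_psi rho_pos[of t] by (simp add: xf_def)

lemma W0: "W 0 t = 1" by (simp add: W_def)
lemma W1: "t \<ge> 0 \<Longrightarrow> W 1 t = mu t" using rho_cos_psi by (simp add: W_def)

lemma cos_rec: "cos (real (Suc (Suc n)) * x) = 2 * cos x * cos (real (Suc n) * x) - cos (real n * x)"
proof -
  have "cos ((real n + 1) * x + x) + cos ((real n + 1) * x - x) = 2 * cos x * cos ((real n + 1) * x)"
    by (simp add: cos_add cos_diff)
  thus ?thesis by (simp add: algebra_simps)
qed

lemma W_rec: "t \<ge> 0 \<Longrightarrow> W (Suc (Suc n)) t = 2 * mu t * W (Suc n) t - rho t ^ 2 * W n t"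
proof -
  assume t: "t \<ge> 0"
  have "W (Suc (Suc n)) t = rho t ^ Suc (Suc n) * (2 * cos (psi t) * cos (real (Suc n) * psi t) - cos (real n * psi t))"
    unfolding W_def cos_rec ..
  also have "\<dots> = rho t ^ n * rho t^2 * (2 * cos (psi t) * cos (real (Suc n) * psi t) - cos (real n * psi t))"
    by (simp add: power2_eq_square)
  also have "\<dots> = 2 * (rho t * cos (psi t)) * (rho t ^ Suc n * cos (real (Suc n) * psi t)) - rho t^2 * (rho t ^ n * cos (real n * psi t))"
    by (simp add: algebra_simps power2_eq_square)
  finally show ?thesis using rho_cos_psi[OF t] by (simp add: W_def)
qed

lemma gpoly_odd: "gpoly (2*Suc k+1) = 2 * gpoly (2*k+2) - rho_poly ^ 2 * gpoly (2*k+1)"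
proof -
  have "2*Suc k+1 = Suc (Suc (Suc (2*k)))" by simp
  hence "gpoly (2*Suc k+1) = 2 * gpoly (Suc (Suc (2*k))) - rho_poly ^ 2 * gpoly (Suc (2*k))"
    by (simp only: gpoly.simps) simp
  thus ?thesis by (simp only: Suc_eq_plus1 numeral_2_eq_2 add.assoc) simp
qed

lemma gpoly_even: "gpoly (2*Suc k+2) = 2 * mu_poly ^ 2 * gpoly (2*Suc k+1) - rho_poly ^ 2 * gpoly (2*k+2)"
proof -
  have "2*Suc k+2 = Suc (Suc (Suc (2*k+1)))" by simp
  hence "gpoly (2*Suc k+2) = 2 * mu_poly ^ 2 * gpoly (Suc (Suc (2*k+1))) - rho_poly ^ 2 * gpoly (Suc (2*k+1))"
    by (simp only: gpoly.simps) simp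
  thus ?thesis by (simp only: Suc_eq_plus1 numeral_2_eq_2 add.assoc) simp
qed

lemma g_W: assumes "t \<ge> 0"
  shows "poly (gpoly (2*k+1)) t * mu t = W (2*k+1) t \<and> poly (gpoly (2*k+2)) t = W (2*k+2) t"
proof (induction k)
  case 0
  have "W (Suc (Suc 0)) t = 2 * mu t * mu t - rho t ^ 2"
    using W_rec[OF assms, of 0] W1[OF assms] W0 by simp
  moreover have "poly [:1, -10, 19, -10, 1:] t = 2 * mu t * mu t - rho t ^ 2"
    by (simp add: mu_eq rho_eq power2_eq_square algebra_simps)
  moreover have "gpoly 2 = [:1, -10, 19, -10, 1:]" by (simp add: numeral_2_eq_2)
  ultimately show ?case using W1[OF assms] by simp
next
  case (Suc k)
  have w1: "W (2*Suc k+1) t = 2 * mu t * W (2*k+2) t - rho t ^ 2 * W (2*k+1) t"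
    using W_rec[OF assms, of "2*k+1"] by (simp add: numeral_2_eq_2)
  have w2: "W (2*Suc k+2) t = 2 * mu t * W (2*Suc k+1) t - rho t ^ 2 * W (2*k+2) t"
    using W_rec[OF assms, of "2*k+2"] by (simp add: numeral_2_eq_2)
  have p1: "poly (gpoly (2*Suc k+1)) t = 2 * poly (gpoly (2*k+2)) t - rho t ^ 2 * poly (gpoly (2*k+1)) t"
    unfolding gpoly_odd by (simp add: rho_def)
  have p2: "poly (gpoly (2*Suc k+2)) t = 2 * mu t ^ 2 * poly (gpoly (2*Suc k+1)) t - rho t ^ 2 * poly (gpoly (2*k+2)) t"
    unfolding gpoly_even by (simp add: rho_def mu_def)
  have IH1: "poly (gpoly (2*k+1)) t * mu t = W (2*k+1) t" and IH2: "poly (gpoly (2*k+2)) t = W (2*k+2) t"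
    using Suc by auto
  have A: "poly (gpoly (2*Suc k+1)) t * mu t = W (2*Suc k+1) t"
  proof -
    have "poly (gpoly (2*Suc k+1)) t * mu t = 2 * mu t * poly (gpoly (2*k+2)) t - rho t ^ 2 * (poly (gpoly (2*k+1)) t * mu t)"
      unfolding p1 by (simp add: algebra_simps)
    also have "\<dots> = W (2*Suc k+1) t" unfolding IH1 IH2 w1 ..
    finally show ?thesis .
  qed
  have B: "poly (gpoly (2*Suc k+2)) t = W (2*Suc k+2) t"
  proof -
    have "poly (gpoly (2*Suc k+2)) t = 2 * mu t * (poly (gpoly (2*Suc k+1)) t * mu t) - rho t ^ 2 * poly (gpoly (2*k+2)) t"
      unfolding p2 by (simp add: algebra_simps power2_eq_square)
    also have "\<dots> = W (2*Suc k+2) t" unfolding A IH2 w2 ..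
    finally show ?thesis .
  qed
  show ?case using A B by simp
qed

lemma xf_strict: assumes "0 \<le> s" "s < t" "t \<le> 1" shows "xf t < xf s"
proof -
  have rs: "rho s > 0" and rt: "rho t > 0" by (rule rho_pos)+
  have st: "s * t < 1"
  proof -
    have "s * t \<le> s * 1" using assms by (intro mult_left_mono) auto
    thus ?thesis using assms by simp
  qed
  have "t * rho s - s * rho t = (t - s) * (1 - s * t)"
    by (simp add: rho_eq power2_eq_square algebra_simps)
  moreover have "(t - s) * (1 - s * t) > 0" using assms st by (intro mult_pos_pos) auto
  ultimately have key: "s * rho t < t * rho s" by linarith
  have xs: "xf s = 1 - 2 * s / rho s" using rs by (simp add: xf_def mu_eq rho_eq field_simps)
  have xt: "xf t = 1 - 2 * t / rho t" using rt by (simp add: xf_def mu_eq rho_eq field_simps)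
  have "s / rho s < t / rho t" using key rs rt by (simp add: divide_simps mult.commute)
  thus ?thesis unfolding xs xt by simp
qed

lemma psi_strict: assumes "0 \<le> s" "s < t" "t \<le> 1" shows "psi s < psi t"
  unfolding psi_def using xf_strict[OF assms] xf_bounds[of s] xf_bounds[of t] assms
  by (intro arccos_less_arccos) auto

lemma psi_range: "t \<ge> 0 \<Longrightarrow> 0 \<le> psi t \<and> psi t \<le> pi"
  unfolding psi_def using xf_bounds[of t] arccos_bounded by auto

lemma psi_0: "psi 0 = 0" by (simp add: psi_def xf_def mu_eq rho_eq)
lemma psi_1: "psi 1 = pi" by (simp add: psi_def xf_def mu_eq rho_eq)

lemma sqrt5: "2 < sqrt 5" "sqrt 5 < 3"
proof -
  have "sqrt (2^2) < sqrt 5" by (simp only: real_sqrt_less_iff) simp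
  thus "2 < sqrt 5" by simp
  have "sqrt 5 < sqrt (3^2)" by (simp only: real_sqrt_less_iff) simp
  thus "sqrt 5 < 3" by simp
qed

lemma mu0_bounds: "0 < mu0" "mu0 < 1" using sqrt5 by (auto simp: mu0_def)

lemma mu_mu0: "mu mu0 = 0"
proof -
  have "sqrt 5 * sqrt 5 = 5" by simp
  thus ?thesis by (simp add: mu_eq mu0_def power2_eq_square field_simps)
qed

lemma mu_zero_iff: assumes "0 \<le> t" "t \<le> 1" shows "mu t = 0 \<longleftrightarrow> t = mu0"
proof
  assume h: "mu t = 0"
  have s5: "sqrt 5 * sqrt 5 = 5" by simp
  have "mu t = (t - mu0) * (t - (3 + sqrt 5)/2)"
    by (simp add: mu_eq mu0_def power2_eq_square field_simps s5)
  hence "t = mu0 \<or> t = (3 + sqrt 5)/2" using h by simp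
  moreover have "(3 + sqrt 5)/2 > 1" using sqrt5 by simp
  ultimately show "t = mu0" using assms by auto
qed (simp add: mu_mu0)

lemma psi_mu0: "psi mu0 = pi/2" by (simp add: psi_def xf_def mu_mu0)

lemma psi_cont: "continuous_on {0..1} psi"
proof -
  have r: "\<And>t. poly rho_poly t \<noteq> 0" using rho_pos unfolding rho_def by (metis less_irrefl)
  have "continuous_on {0..1} xf" unfolding xf_def mu_def rho_def
    using r by (auto intro!: continuous_intros)
  thus ?thesis unfolding psi_def using xf_bounds
    by (intro continuous_on_arccos) auto
qed

lemma psi_onto: assumes "0 \<le> th" "th \<le> pi" shows "\<exists>t. 0 \<le> t \<and> t \<le> 1 \<and> psi t = th"
  using IVT'[of psi 0 th 1, OF _ _ _ psi_cont] assms psi_0 psi_1 by auto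

definition phi :: "real \<Rightarrow> real" where "phi th = (SOME t. 0 \<le> t \<and> t \<le> 1 \<and> psi t = th)"

lemma phi: assumes "0 \<le> th" "th \<le> pi" shows "0 \<le> phi th" "phi th \<le> 1" "psi (phi th) = th"
  using someI_ex[OF psi_onto[OF assms]] unfolding phi_def by auto

lemma psi_inj: "0 \<le> s \<Longrightarrow> s \<le> 1 \<Longrightarrow> 0 \<le> t \<Longrightarrow> t \<le> 1 \<Longrightarrow> psi s = psi t \<Longrightarrow> s = t"
  using psi_strict[of s t] psi_strict[of t s] by (cases s t rule: linorder_cases) auto

lemma phi_psi: "0 \<le> t \<Longrightarrow> t \<le> 1 \<Longrightarrow> phi (psi t) = t"
  using phi[of "psi t"] psi_range[of t] psi_inj by auto

lemma phi_strict: assumes "0 \<le> a" "a < b" "b \<le> pi" shows "phi a < phi b"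
proof (rule ccontr)
  assume "\<not> phi a < phi b"
  hence "phi b \<le> phi a" by simp
  hence "psi (phi b) \<le> psi (phi a)"
    using psi_strict[of "phi b" "phi a"] phi[of a] phi[of b] assms by (cases "phi b = phi a") auto
  thus False using phi[of a] phi[of b] assms by auto
qed

lemma zeros_as_image: "{t. 0 \<le> t \<and> t \<le> 1 \<and> P (psi t)} = phi ` {th. 0 \<le> th \<and> th \<le> pi \<and> P th}"
proof (intro set_eqI iffI)
  fix t assume "t \<in> {t. 0 \<le> t \<and> t \<le> 1 \<and> P (psi t)}"
  hence t: "0 \<le> t" "t \<le> 1" "P (psi t)" by auto
  hence "t = phi (psi t)" using phi_psi by simp
  thus "t \<in> phi ` {th. 0 \<le> th \<and> th \<le> pi \<and> P th}" using t psi_range[of t] by blast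
next
  fix t assume "t \<in> phi ` {th. 0 \<le> th \<and> th \<le> pi \<and> P th}"
  then obtain th where "t = phi th" "0 \<le> th" "th \<le> pi" "P th" by blast
  thus "t \<in> {t. 0 \<le> t \<and> t \<le> 1 \<and> P (psi t)}" using phi[of th] by auto
qed

lemma rho_inv: "t \<noteq> 0 \<Longrightarrow> rho (1/t) = rho t / t^2"
  by (simp add: rho_eq field_simps power2_eq_square)
lemma mu_inv: "t \<noteq> 0 \<Longrightarrow> mu (1/t) = mu t / t^2"
  by (simp add: mu_eq field_simps power2_eq_square)
lemma psi_inv: "t \<noteq> 0 \<Longrightarrow> psi (1/t) = psi t"
  unfolding psi_def xf_def using rho_pos[of t] by (simp add: rho_inv mu_inv)

lemma nth_sorted_image:
  fixes f :: "nat \<Rightarrow> real"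
  assumes mono: "\<And>i j. 1 \<le> i \<Longrightarrow> i < j \<Longrightarrow> j \<le> n \<Longrightarrow> f i < f j"
  shows "\<And>i. 1 \<le> i \<Longrightarrow> i \<le> n \<Longrightarrow> sorted_list_of_set (f ` {1..n}) ! (i-1) = f i"
    and "card (f ` {1..n}) = n" and "finite (f ` {1..n})"
proof -
  define xs where "xs = map f [1..<n+1]"
  have sw: "sorted_wrt (<) xs" unfolding xs_def sorted_wrt_map
    by (rule sorted_wrt_mono_rel[OF _ sorted_wrt_upt]) (auto intro: mono)
  hence sd: "sorted xs" "distinct xs" by (auto simp: strict_sorted_iff)
  have set: "set xs = f ` {1..n}" unfolding xs_def by auto
  have eq: "sorted_list_of_set (f ` {1..n}) = xs"
    unfolding set[symmetric] sorted_list_of_set_sort_remdups using sd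
    by (simp add: distinct_remdups_id sorted_sort_id)
  show "\<And>i. 1 \<le> i \<Longrightarrow> i \<le> n \<Longrightarrow> sorted_list_of_set (f ` {1..n}) ! (i-1) = f i"
  proof -
    fix i assume "1 \<le> i" "i \<le> n"
    hence "[1..<n+1] ! (i-1) = i" by (subst nth_upt) auto
    thus "sorted_list_of_set (f ` {1..n}) ! (i-1) = f i" unfolding eq xs_def
      using \<open>1 \<le> i\<close> \<open>i \<le> n\<close> by (simp del: upt_Suc)
  qed
  show "card (f ` {1..n}) = n" using sd(2) set distinct_card[of xs] by (simp add: xs_def)
  show "finite (f ` {1..n})" by simp
qed

definition ang :: "nat \<Rightarrow> nat \<Rightarrow> real" where
  "ang n i = (2 * real i - 1) * pi / (2 * real n)"

lemma ang_bounds: assumes "1 \<le> i" "i \<le> n" shows "0 < ang n i" "ang n i < pi"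
proof -
  have n: "real n \<ge> 1" "real i \<ge> 1" "real i \<le> real n" using assms by auto
  show "0 < ang n i" unfolding ang_def using n by (intro divide_pos_pos mult_pos_pos) auto
  have "(2 * real i - 1) * pi < (2 * real n) * pi" using n by (intro mult_strict_right_mono) auto
  thus "ang n i < pi" unfolding ang_def using n by (simp add: divide_simps)
qed

lemma ang_less: assumes "1 \<le> n" "1 \<le> n'"
  and "(2 * real i - 1) * real n' < (2 * real i' - 1) * real n"
  shows "ang n i < ang n' i'"
proof -
  have "(2 * real i - 1) * real n' * pi < (2 * real i' - 1) * real n * pi"
    using assms(3) by (intro mult_strict_right_mono) auto
  thus ?thesis unfolding ang_def using assms(1,2) by (simp add: divide_simps algebra_simps)
qed

lemma cos_zero_set: assumes "1 \<le> n"
  shows "{th. 0 \<le> th \<and> th \<le> pi \<and> cos (real n * th) = 0} = ang n ` {1..n}"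
proof (intro set_eqI iffI)
  fix th assume "th \<in> {th. 0 \<le> th \<and> th \<le> pi \<and> cos (real n * th) = 0}"
  hence th: "0 \<le> th" "th \<le> pi" "cos (real n * th) = 0" by auto
  have nn: "real n * th \<ge> 0" using th by simp
  obtain j where j: "odd j" "real n * th = real j * (pi/2)"
  proof -
    from th(3)[unfolded cos_zero_iff] show ?thesis
    proof
      assume "\<exists>j. odd j \<and> real n * th = real j * (pi/2)" thus ?thesis using that by blast
    next
      assume "\<exists>j. odd j \<and> real n * th = - (real j * (pi/2))"
      then obtain j where "odd j" "real n * th = - (real j * (pi/2))" by blast
      moreover have "real j > 0" using \<open>odd j\<close> by (cases j) auto
      ultimately have "real n * th < 0" by (simp add: mult_pos_pos)
      thus ?thesis using nn by simp
    qed
  qed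
  obtain i' where i': "j = 2*i' + 1" using j(1) oddE by blast
  have "real j * (pi/2) \<le> real n * pi" using j(2) th(2) assms
    by (metis mult_left_mono of_nat_0_le_iff)
  hence "real j \<le> 2 * real n" by (simp add: field_simps)
  hence "i' + 1 \<le> n" using i' by simp
  moreover have "th = ang n (i'+1)" using j(2) i' assms unfolding ang_def
    by (simp add: field_simps)
  ultimately show "th \<in> ang n ` {1..n}" by force
next
  fix th assume "th \<in> ang n ` {1..n}"
  then obtain i where i: "1 \<le> i" "i \<le> n" "th = ang n i" by auto
  have "real n * th = real (2*i - 1) * (pi/2)" using i assms unfolding ang_def
    by (simp add: field_simps of_nat_diff)
  moreover have "odd (2*i-1)" using i by simp
  ultimately have "cos (real n * th) = 0" unfolding cos_zero_iff by blast
  thus "th \<in> {th. 0 \<le> th \<and> th \<le> pi \<and> cos (real n * th) = 0}"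
    using ang_bounds[OF i(1,2)] i by auto
qed

lemma g_mu0: "poly (gpoly (2*k+1)) mu0 = real (2*k+1) * (-(rho mu0 ^ 2)) ^ k \<and>
              poly (gpoly (2*k+2)) mu0 = (-(rho mu0 ^ 2)) ^ (k+1)"
proof (induction k)
  case 0
  have "gpoly 2 = [:1, -10, 19, -10, 1:]" by (simp add: numeral_2_eq_2)
  moreover have "poly [:1, -10, 19, -10, 1:] mu0 = 2 * mu mu0 * mu mu0 - rho mu0 ^ 2"
    by (simp add: mu_eq rho_eq power2_eq_square algebra_simps)
  ultimately show ?case by (simp add: mu_mu0)
next
  case (Suc k)
  have p1: "poly (gpoly (2*Suc k+1)) mu0 = 2 * poly (gpoly (2*k+2)) mu0 - rho mu0 ^ 2 * poly (gpoly (2*k+1)) mu0"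
    unfolding gpoly_odd by (simp add: rho_def)
  have p2: "poly (gpoly (2*Suc k+2)) mu0 = 2 * mu mu0 ^ 2 * poly (gpoly (2*Suc k+1)) mu0 - rho mu0 ^ 2 * poly (gpoly (2*k+2)) mu0"
    unfolding gpoly_even by (simp add: rho_def mu_def)
  have A: "poly (gpoly (2*Suc k+1)) mu0 = real (2*Suc k+1) * (-(rho mu0 ^ 2)) ^ Suc k"
    unfolding p1 using Suc by (simp add: algebra_simps)
  have B: "poly (gpoly (2*Suc k+2)) mu0 = (-(rho mu0 ^ 2)) ^ (Suc k+1)"
    unfolding p2 using Suc by (simp add: mu_mu0 algebra_simps)
  show ?case using A B by blast
qed

lemma g_odd_mu0_nz: "poly (gpoly (2*k+1)) mu0 \<noteq> 0"
  using g_mu0[of k] rho_pos[of mu0] by simp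

lemma zeros_even: "zeros01 (gpoly (2*k+2)) = phi ` ang (2*k+2) ` {1..2*k+2}"
proof -
  have "\<And>t. 0 \<le> t \<Longrightarrow> poly (gpoly (2*k+2)) t = 0 \<longleftrightarrow> cos (real (2*k+2) * psi t) = 0"
  proof -
    fix t :: real assume t: "0 \<le> t"
    have "rho t ^ (2*k+2) \<noteq> 0" using rho_pos[of t] by simp
    thus "poly (gpoly (2*k+2)) t = 0 \<longleftrightarrow> cos (real (2*k+2) * psi t) = 0"
      using g_W[OF t, of k] unfolding W_def by simp
  qed
  hence "zeros01 (gpoly (2*k+2)) = {t. 0 \<le> t \<and> t \<le> 1 \<and> cos (real (2*k+2) * psi t) = 0}"
    unfolding zeros01_def by blast
  also have "\<dots> = phi ` {th. 0 \<le> th \<and> th \<le> pi \<and> cos (real (2*k+2) * th) = 0}"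
    by (rule zeros_as_image)
  also have "\<dots> = phi ` ang (2*k+2) ` {1..2*k+2}" by (subst cos_zero_set) auto
  finally show ?thesis .
qed

definition cc :: "nat \<Rightarrow> nat \<Rightarrow> real" where
  "cc k i = ang (2*k+1) (if i \<le> k then i else i+1)"

lemma ang_inj: "1 \<le> n \<Longrightarrow> ang n i = ang n j \<Longrightarrow> i = j"
  unfolding ang_def by (auto simp: field_simps)

lemma ang_mid: "ang (2*k+1) (k+1) = pi/2"
  unfolding ang_def by (simp add: field_simps)

lemma odd_angle_set:
  "{th. 0 \<le> th \<and> th \<le> pi \<and> cos (real (2*k+1) * th) = 0 \<and> th \<noteq> pi/2} = cc k ` {1..2*k}"
proof -
  have "{th. 0 \<le> th \<and> th \<le> pi \<and> cos (real (2*k+1) * th) = 0 \<and> th \<noteq> pi/2}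
      = {th. 0 \<le> th \<and> th \<le> pi \<and> cos (real (2*k+1) * th) = 0} - {pi/2}" by auto
  also have "\<dots> = ang (2*k+1) ` {1..2*k+1} - {pi/2}" by (subst cos_zero_set) auto
  also have "\<dots> = cc k ` {1..2*k}"
  proof (intro set_eqI iffI)
    fix th assume "th \<in> ang (2*k+1) ` {1..2*k+1} - {pi/2}"
    then obtain i where i: "1 \<le> i" "i \<le> 2*k+1" "th = ang (2*k+1) i" "th \<noteq> pi/2" by auto
    have "i \<noteq> k+1" using i ang_mid by auto
    show "th \<in> cc k ` {1..2*k}"
    proof (cases "i \<le> k")
      case True
      hence "cc k i = th" using i by (simp add: cc_def)
      thus ?thesis using True i by force
    next
      case False
      hence "\<not> (i - 1 \<le> k)" "i - 1 + 1 = i" using \<open>i \<noteq> k+1\<close> by auto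
      hence "cc k (i-1) = th" using i by (simp only: cc_def if_False)
      moreover have "i - 1 \<in> {1..2*k}" using False i \<open>i \<noteq> k+1\<close> by auto
      ultimately show ?thesis by force
    qed
  next
    fix th assume "th \<in> cc k ` {1..2*k}"
    then obtain i where i: "1 \<le> i" "i \<le> 2*k" "th = cc k i" by auto
    define j where "j = (if i \<le> k then i else i+1)"
    have j: "1 \<le> j" "j \<le> 2*k+1" "j \<noteq> k+1" "th = ang (2*k+1) j"
      using i by (auto simp: j_def cc_def)
    have "th \<noteq> pi/2"
    proof
      assume "th = pi/2"
      hence "ang (2*k+1) j = ang (2*k+1) (k+1)" using j ang_mid[of k] by (simp only:)
      hence "j = k+1" by (rule ang_inj[rotated]) simp
      thus False using j by simp
    qed
    thus "th \<in> ang (2*k+1) ` {1..2*k+1} - {pi/2}" using j by auto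
  qed
  finally show ?thesis .
qed

lemma zeros_odd_char: "zeros01 (gpoly (2*k+1)) =
   {t. 0 \<le> t \<and> t \<le> 1 \<and> (cos (real (2*k+1) * psi t) = 0 \<and> psi t \<noteq> pi/2)}"
proof (intro set_eqI iffI)
  fix t assume "t \<in> zeros01 (gpoly (2*k+1))"
  hence t: "0 \<le> t" "t \<le> 1" "poly (gpoly (2*k+1)) t = 0" by (auto simp: zeros01_def)
  have "t \<noteq> mu0" using t g_odd_mu0_nz by auto
  hence np: "psi t \<noteq> pi/2" using psi_inj[of t mu0] t mu0_bounds psi_mu0 by auto
  have "W (2*k+1) t = 0" using g_W[OF t(1), of k] t by simp
  hence "cos (real (2*k+1) * psi t) = 0" using rho_pos[of t] by (simp add: W_def)
  thus "t \<in> {t. 0 \<le> t \<and> t \<le> 1 \<and> (cos (real (2*k+1) * psi t) = 0 \<and> psi t \<noteq> pi/2)}"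
    using t np by auto
next
  fix t assume "t \<in> {t. 0 \<le> t \<and> t \<le> 1 \<and> (cos (real (2*k+1) * psi t) = 0 \<and> psi t \<noteq> pi/2)}"
  hence t: "0 \<le> t" "t \<le> 1" "cos (real (2*k+1) * psi t) = 0" "psi t \<noteq> pi/2" by auto
  have "t \<noteq> mu0" using t(4) psi_mu0 by auto
  hence "mu t \<noteq> 0" using mu_zero_iff t by auto
  moreover have "poly (gpoly (2*k+1)) t * mu t = 0" using g_W[OF t(1), of k] t(3) by (simp add: W_def)
  ultimately show "t \<in> zeros01 (gpoly (2*k+1))" using t by (simp add: zeros01_def)
qed

lemma zeros_odd: "zeros01 (gpoly (2*k+1)) = phi ` cc k ` {1..2*k}"
  unfolding zeros_odd_char odd_angle_set[symmetric]
  using zeros_as_image[of "\<lambda>th. cos (real (2*k+1) * th) = 0 \<and> th \<noteq> pi/2"] by simp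

lemma rsf_count:
  fixes p :: "real poly"
  assumes p: "p \<noteq> 0" and fin: "finite S" and roots: "\<forall>x\<in>S. poly p x = 0" and deg: "degree p \<le> card S"
  shows "rsquarefree p"
  unfolding rsquarefree_def
proof (intro conjI allI p)
  fix a
  show "order a p = 0 \<or> order a p = 1"
  proof (rule ccontr)
    assume "\<not> (order a p = 0 \<or> order a p = 1)"
    hence "2 \<le> order a p" by simp
    hence "[:-a, 1:] ^ 2 dvd p" using order_divides by blast
    then obtain q where q: "p = [:-a, 1:] ^ 2 * q" by (elim dvdE)
    define r where "r = [:-a, 1:] * q"
    have pr: "p = [:-a, 1:] * r" unfolding r_def q by (simp only: power2_eq_square mult.assoc)
    have r0: "r \<noteq> 0" using p pr by auto
    have dr: "degree p = degree r + 1" unfolding pr using r0 by (subst degree_mult_eq) auto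
    have ra: "poly r a = 0" unfolding r_def by simp
    have "S \<subseteq> {x. poly r x = 0}"
    proof
      fix x assume "x \<in> S"
      hence "poly p x = 0" using roots by blast
      moreover have "poly p x = (x - a) * poly r x" by (simp add: pr algebra_simps)
      ultimately have "(x - a) * poly r x = 0" by simp
      thus "x \<in> {x. poly r x = 0}" using ra by (cases "x = a") auto
    qed
    hence "card S \<le> card {x. poly r x = 0}" using poly_roots_finite[OF r0] by (rule card_mono[rotated])
    also have "\<dots> \<le> degree r" by (rule card_poly_roots_bound[OF r0])
    finally show False using deg dr by simp
  qed
qed

lemma deg_g: "degree (gpoly (2*k+1)) \<le> 4*k \<and> degree (gpoly (2*k+2)) \<le> 4*k+4"
proof (induction k)
  case 0
  have "gpoly 2 = [:1, -10, 19, -10, 1:]" by (simp add: numeral_2_eq_2)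
  then show ?case by simp
next
  case (Suc k)
  have dr: "degree (rho_poly ^ 2) \<le> 4" using degree_power_le[of rho_poly 2] by (simp add: rho_poly_def)
  have dm: "degree (2 * mu_poly ^ 2) \<le> 4"
    using degree_power_le[of mu_poly 2] degree_mult_le[of 2 "mu_poly^2"] by (simp add: mu_poly_def)
  have d2: "degree (2 * p) \<le> degree p" for p :: "real poly"
    using degree_mult_le[of 2 p] by simp
  have A: "degree (gpoly (2*Suc k+1)) \<le> 4 * Suc k"
    unfolding gpoly_odd
    using degree_diff_le_max[of "2 * gpoly (2*k+2)" "rho_poly ^ 2 * gpoly (2*k+1)"]
      d2[of "gpoly (2*k+2)"] degree_mult_le[of "rho_poly ^ 2" "gpoly (2*k+1)"] dr Suc by (simp add: max_def split: if_splits)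
  have B: "degree (gpoly (2*Suc k+2)) \<le> 4 * Suc k + 4"
    unfolding gpoly_even
    using degree_diff_le_max[of "2 * mu_poly ^ 2 * gpoly (2*Suc k+1)" "rho_poly ^ 2 * gpoly (2*k+2)"]
      degree_mult_le[of "2 * mu_poly ^ 2" "gpoly (2*Suc k+1)"] dm
      degree_mult_le[of "rho_poly ^ 2" "gpoly (2*k+2)"] dr Suc A by (simp add: max_def split: if_splits)
  show ?case using A B by simp
qed

lemma g_at0: "poly (gpoly (2*k+1)) 0 = 1 \<and> poly (gpoly (2*k+2)) 0 = 1"
  using g_W[of 0 k] by (simp add: W_def psi_0 mu_eq rho_eq)

lemma g_nz: "gpoly (2*k+1) \<noteq> 0" "gpoly (2*k+2) \<noteq> 0"
  using g_at0[of k] by auto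

lemma cos_ne_pi2: "0 \<le> x \<Longrightarrow> x \<le> pi \<Longrightarrow> x \<noteq> pi/2 \<Longrightarrow> cos x \<noteq> 0"
  using arccos_cos[of x] by auto

lemma cos_consec: assumes "cos (real n * x) = 0" "cos (real (Suc n) * x) = 0" "0 \<le> x" "x \<le> pi"
  shows False
proof -
  have "cos (real n * x + x) = 0" using assms(2) by (simp add: algebra_simps)
  hence "sin (real n * x) * sin x = 0" using assms(1) by (simp add: cos_add)
  moreover have "sin (real n * x) \<noteq> 0"
    using sin_cos_squared_add[of "real n * x"] assms(1) by auto
  ultimately have "sin x = 0" by simp
  hence "x = 0 \<or> x = pi" using sin_gt_zero[of x] assms(3,4) by force
  thus False using assms(1) by auto
qed

lemma Z_props:
  assumes "t \<in> {t. 0 \<le> t \<and> t \<le> 1 \<and> cos (real n * psi t) = 0}"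
  shows "0 < t" "t < 1"
proof -
  have t: "0 \<le> t" "t \<le> 1" "cos (real n * psi t) = 0" using assms by auto
  show "0 < t" using t psi_0 by (cases "t = 0") auto
  show "t < 1" using t psi_1 by (cases "t = 1") auto
qed

lemma Zeven_props: assumes "t \<in> zeros01 (gpoly (2*k+2))"
  shows "0 < t" "t < 1" "poly (gpoly (2*k+2)) t = 0" "poly (gpoly (2*k+2)) (1/t) = 0"
    "cos (real (2*k+2) * psi t) = 0"
proof -
  have t: "0 \<le> t" "t \<le> 1" "poly (gpoly (2*k+2)) t = 0" using assms by (auto simp: zeros01_def)
  have "W (2*k+2) t = 0" using g_W[OF t(1), of k] t by simp
  hence c: "cos (real (2*k+2) * psi t) = 0" using rho_pos[of t] by (simp add: W_def)
  thus "cos (real (2*k+2) * psi t) = 0" .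
  show "0 < t" "t < 1" using Z_props[of t "2*k+2"] t c by auto
  thus "poly (gpoly (2*k+2)) (1/t) = 0" using g_W[of "1/t" k] c psi_inv[of t] by (simp add: W_def)
  show "poly (gpoly (2*k+2)) t = 0" by (rule t(3))
qed

lemma Zodd_props: assumes "t \<in> zeros01 (gpoly (2*k+1))"
  shows "0 < t" "t < 1" "poly (gpoly (2*k+1)) t = 0" "poly (gpoly (2*k+1)) (1/t) = 0"
    "cos (real (2*k+1) * psi t) = 0"
proof -
  have t: "0 \<le> t" "t \<le> 1" "poly (gpoly (2*k+1)) t = 0" using assms by (auto simp: zeros01_def)
  have c: "cos (real (2*k+1) * psi t) = 0" "psi t \<noteq> pi/2" using assms unfolding zeros_odd_char by auto
  thus "cos (real (2*k+1) * psi t) = 0" by simp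
  show t0: "0 < t" "t < 1" using Z_props[of t "2*k+1"] t c by auto
  have "mu (1/t) = rho (1/t) * cos (psi t)" using rho_cos_psi[of "1/t"] psi_inv[of t] t0 by simp
  moreover have "cos (psi t) \<noteq> 0" using cos_ne_pi2 psi_range[of t] t c by auto
  ultimately have "mu (1/t) \<noteq> 0" using rho_pos[of "1/t"] by simp
  moreover have "poly (gpoly (2*k+1)) (1/t) * mu (1/t) = 0"
    using g_W[of "1/t" k] c psi_inv[of t] t0 by (simp add: W_def)
  ultimately show "poly (gpoly (2*k+1)) (1/t) = 0" by simp
  show "poly (gpoly (2*k+1)) t = 0" by (rule t(3))
qed

lemma rsf_pair:
  fixes p q :: "real poly"
  assumes p: "p \<noteq> 0" and q: "q \<noteq> 0" and f1: "finite Z1" and f2: "finite Z2"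
    and s1: "\<forall>t\<in>Z1. 0 < t \<and> t < 1 \<and> poly p t = 0 \<and> poly p (1/t) = 0"
    and s2: "\<forall>t\<in>Z2. 0 < t \<and> t < 1 \<and> poly q t = 0 \<and> poly q (1/t) = 0"
    and dis: "Z1 \<inter> Z2 = {}"
    and deg: "degree p + degree q \<le> 2 * (card Z1 + card Z2)"
  shows "rsquarefree (p * q)"
proof -
  define U where "U = Z1 \<union> Z2"
  define S where "S = U \<union> (\<lambda>t. 1/t) ` U"
  have fU: "finite U" using f1 f2 by (simp add: U_def)
  have cU: "card U = card Z1 + card Z2" unfolding U_def using f1 f2 dis by (rule card_Un_disjoint)
  have inj: "inj_on (\<lambda>t. 1/t) U" by (auto simp: inj_on_def)
  have U01: "\<forall>t\<in>U. 0 < t \<and> t < 1" using s1 s2 by (auto simp: U_def)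
  have disj: "U \<inter> (\<lambda>t. 1/t) ` U = {}"
  proof -
    have "\<forall>t\<in>U. 1/t > 1" using U01 by (auto simp: field_simps)
    show ?thesis
    proof (rule ccontr)
      assume "U \<inter> (\<lambda>t. 1/t) ` U \<noteq> {}"
      then obtain s where "s \<in> U" "1/s \<in> U" by auto
      thus False using \<open>\<forall>t\<in>U. 1/t > 1\<close> U01 by fastforce
    qed
  qed
  have cS: "card S = 2 * card U" unfolding S_def
    using card_Un_disjoint[OF fU finite_imageI[OF fU] disj] card_image[OF inj] by simp
  have roots: "\<forall>x\<in>S. poly (p*q) x = 0" using s1 s2 by (auto simp: S_def U_def)
  have "degree (p*q) \<le> card S" using deg cS cU degree_mult_le[of p q] by simp
  thus ?thesis using rsf_count[of "p*q" S] p q fU roots by (simp add: S_def)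
qed

lemma phi_ang_less: assumes "1 \<le> i" "i \<le> n" "1 \<le> i'" "i' \<le> n'"
  "(2*real i - 1) * real n' < (2*real i' - 1) * real n"
  shows "phi (ang n i) < phi (ang n' i')"
  using phi_strict[of "ang n i" "ang n' i'"] ang_bounds[of i n] ang_bounds[of i' n'] ang_less[of n n' i i'] assms
  by auto

lemma phi_ang_mu0: assumes "1 \<le> i" "i \<le> n"
  shows "2*real i - 1 < real n \<Longrightarrow> phi (ang n i) < mu0"
    and "real n < 2*real i - 1 \<Longrightarrow> mu0 < phi (ang n i)"
proof -
  have m: "mu0 = phi (pi/2)" using phi_psi[of mu0] psi_mu0 mu0_bounds by simp
  have n: "real n \<ge> 1" using assms by simp
  have b: "0 < ang n i" "ang n i < pi" using ang_bounds[OF assms] by auto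
  have e: "ang n i = (2*real i - 1) / real n * (pi/2)" unfolding ang_def using n by (simp add: field_simps)
  show "2*real i - 1 < real n \<Longrightarrow> phi (ang n i) < mu0"
  proof -
    assume "2*real i - 1 < real n"
    hence "(2*real i - 1) / real n < 1" using n by (simp add: divide_simps)
    hence "(2*real i - 1) / real n * (pi/2) < 1 * (pi/2)" by (intro mult_strict_right_mono) auto
    hence "ang n i < pi/2" unfolding e by simp
    thus ?thesis unfolding m using phi_strict[of "ang n i" "pi/2"] b by simp
  qed
  show "real n < 2*real i - 1 \<Longrightarrow> mu0 < phi (ang n i)"
  proof -
    assume "real n < 2*real i - 1"
    hence "(2*real i - 1) / real n > 1" using n by (simp add: divide_simps)
    hence "1 * (pi/2) < (2*real i - 1) / real n * (pi/2)" by (intro mult_strict_right_mono) auto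
    hence "ang n i > pi/2" unfolding e by simp
    thus ?thesis unfolding m using phi_strict[of "pi/2" "ang n i"] b by simp
  qed
qed

lemma phi_ang_1: assumes "1 \<le> i" "i \<le> n" shows "phi (ang n i) < 1"
proof -
  have "1 = phi pi" using phi_psi[of 1] psi_1 by simp
  thus ?thesis using phi_strict[of "ang n i" pi] ang_bounds[OF assms] by simp
qed

lemma mono_ang: "1 \<le> n \<Longrightarrow> 1 \<le> i \<Longrightarrow> i < j \<Longrightarrow> j \<le> n \<Longrightarrow> (phi \<circ> ang n) i < (phi \<circ> ang n) j"
  by (auto intro!: phi_ang_less simp: algebra_simps)

lemma lin_less: "i < j \<Longrightarrow> 1 \<le> n \<Longrightarrow> (2*real i - 1) * real n < (2*real j - 1) * real n"
  by (intro mult_strict_right_mono) auto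

lemma mono_cc: assumes "1 \<le> i" "i < j" "j \<le> 2*k" shows "(phi \<circ> cc k) i < (phi \<circ> cc k) j"
proof -
  define i' where "i' = (if i \<le> k then i else i+1)"
  define j' where "j' = (if j \<le> k then j else j+1)"
  have "1 \<le> i'" "i' < j'" "j' \<le> 2*k+1" using assms by (auto simp: i'_def j'_def)
  hence "phi (ang (2*k+1) i') < phi (ang (2*k+1) j')"
    by (intro phi_ang_less lin_less) auto
  thus ?thesis by (simp add: cc_def i'_def j'_def)
qed

theorem theorem11p8:
  fixes m :: nat
  assumes "m \<ge> 1"
  defines "A \<equiv> zeros01 (gpoly (2*m - 1))"
      and "B \<equiv> zeros01 (gpoly (2*m))"
      and "C \<equiv> zeros01 (gpoly (2*m + 1))"
      and "\<alpha> \<equiv> (\<lambda>i. sorted_list_of_set (zeros01 (gpoly (2*m - 1))) ! (i - 1))"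
      and "\<beta> \<equiv> (\<lambda>i. sorted_list_of_set (zeros01 (gpoly (2*m))) ! (i - 1))"
      and "\<gamma> \<equiv> (\<lambda>i. sorted_list_of_set (zeros01 (gpoly (2*m + 1))) ! (i - 1))"
  shows "finite A \<and> card A = 2*(m - 1)
       \<and> finite B \<and> card B = 2*m
       \<and> finite C \<and> card C = 2*m
       \<and> rsquarefree (gpoly (2*m - 1) * gpoly (2*m))
       \<and> rsquarefree (gpoly (2*m) * gpoly (2*m + 1))
       \<and> (\<forall>i\<in>{1..m-1}. \<beta> i < \<alpha> i \<and> \<alpha> i < \<beta> (i+1))
       \<and> \<beta> m < mu0 \<and> mu0 < \<beta> (m+1)
       \<and> (\<forall>i\<in>{m..2*(m-1)}. \<beta> (i+1) < \<alpha> i \<and> \<alpha> i < \<beta> (i+2))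
       \<and> \<beta> (2*m) < 1
       \<and> (\<forall>i\<in>{1..m}. \<gamma> i < \<beta> i)
       \<and> (\<forall>i\<in>{1..<m}. \<beta> i < \<gamma> (i+1))
       \<and> (\<forall>i\<in>{m+1..2*m}. \<beta> i < \<gamma> i)
       \<and> (\<forall>i\<in>{m+1..<2*m}. \<gamma> i < \<beta> (i+1))
       \<and> \<gamma> (2*m) < 1"
proof -
  obtain k where m: "m = Suc k" using assms(1) by (cases m) auto
  have k3: "2*k+3 = Suc (Suc (Suc (2*k)))" by simp
  have gA: "gpoly (2*m - 1) = gpoly (2*k+1)" and gB: "gpoly (2*m) = gpoly (2*k+2)"
    and gC: "gpoly (2*m+1) = gpoly (2*(k+1)+1)" using m by simp_all
  have ZA: "zeros01 (gpoly (2*k+1)) = (phi \<circ> cc k) ` {1..2*k}"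
    by (simp only: zeros_odd image_comp)
  have ZB: "zeros01 (gpoly (2*k+2)) = (phi \<circ> ang (2*k+2)) ` {1..2*k+2}"
    by (simp only: zeros_even image_comp)
  have ZC: "zeros01 (gpoly (2*(k+1)+1)) = (phi \<circ> cc (k+1)) ` {1..2*(k+1)}"
    by (simp only: zeros_odd image_comp)
  note sA = nth_sorted_image[of "2*k" "phi \<circ> cc k", OF mono_cc]
  note sB = nth_sorted_image[of "2*k+2" "phi \<circ> ang (2*k+2)", OF mono_ang]
  note sC = nth_sorted_image[of "2*(k+1)" "phi \<circ> cc (k+1)", OF mono_cc]
  have al: "\<And>i. 1 \<le> i \<Longrightarrow> i \<le> 2*k \<Longrightarrow> \<alpha> i = phi (cc k i)"
    unfolding \<alpha>_def gA ZA using sA(1) by simp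
  have be: "\<And>i. 1 \<le> i \<Longrightarrow> i \<le> 2*k+2 \<Longrightarrow> \<beta> i = phi (ang (2*k+2) i)"
    unfolding \<beta>_def gB ZB using sB(1) by simp
  have ga: "\<And>i. 1 \<le> i \<Longrightarrow> i \<le> 2*(k+1) \<Longrightarrow> \<gamma> i = phi (cc (k+1) i)"
    unfolding \<gamma>_def gC ZC using sC(1) by simp
  have cards: "finite A \<and> card A = 2*(m - 1) \<and> finite B \<and> card B = 2*m \<and> finite C \<and> card C = 2*m"
    unfolding A_def B_def C_def gA gB gC ZA ZB ZC using sA(2,3) sB(2,3) sC(2,3) m by simp
  have rs1: "rsquarefree (gpoly (2*m - 1) * gpoly (2*m))"
    unfolding gA gB
  proof (rule rsf_pair[of _ _ "zeros01 (gpoly (2*k+1))" "zeros01 (gpoly (2*k+2))"])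
    show "gpoly (2*k+1) \<noteq> 0" "gpoly (2*k+2) \<noteq> 0" by (rule g_nz)+
    show "finite (zeros01 (gpoly (2*k+1)))" "finite (zeros01 (gpoly (2*k+2)))"
      unfolding ZA ZB by simp_all
    show "\<forall>t\<in>zeros01 (gpoly (2*k+1)). 0 < t \<and> t < 1 \<and> poly (gpoly (2*k+1)) t = 0 \<and> poly (gpoly (2*k+1)) (1/t) = 0"
      using Zodd_props by blast
    show "\<forall>t\<in>zeros01 (gpoly (2*k+2)). 0 < t \<and> t < 1 \<and> poly (gpoly (2*k+2)) t = 0 \<and> poly (gpoly (2*k+2)) (1/t) = 0"
      using Zeven_props by blast
    show "zeros01 (gpoly (2*k+1)) \<inter> zeros01 (gpoly (2*k+2)) = {}"
    proof (rule ccontr)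
      assume "zeros01 (gpoly (2*k+1)) \<inter> zeros01 (gpoly (2*k+2)) \<noteq> {}"
      then obtain t where t1: "t \<in> zeros01 (gpoly (2*k+1))" and t2: "t \<in> zeros01 (gpoly (2*k+2))" by blast
      have "cos (real (2*k+1) * psi t) = 0" by (rule Zodd_props(5)[OF t1])
      moreover have "cos (real (Suc (2*k+1)) * psi t) = 0" using Zeven_props(5)[OF t2] by simp
      moreover have "0 \<le> psi t" "psi t \<le> pi" using psi_range[of t] Zodd_props(1)[OF t1] by auto
      ultimately show False by (rule cos_consec)
    qed
    show "degree (gpoly (2*k+1)) + degree (gpoly (2*k+2))
          \<le> 2 * (card (zeros01 (gpoly (2*k+1))) + card (zeros01 (gpoly (2*k+2))))"
      unfolding ZA ZB using sA(2) sB(2) deg_g[of k] by simp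
  qed
  have rs2: "rsquarefree (gpoly (2*m) * gpoly (2*m+1))"
    unfolding gB gC
  proof (rule rsf_pair[of _ _ "zeros01 (gpoly (2*k+2))" "zeros01 (gpoly (2*(k+1)+1))"])
    show "gpoly (2*k+2) \<noteq> 0" "gpoly (2*(k+1)+1) \<noteq> 0" by (rule g_nz)+
    show "finite (zeros01 (gpoly (2*k+2)))" "finite (zeros01 (gpoly (2*(k+1)+1)))"
      unfolding ZC ZB by simp_all
    show "\<forall>t\<in>zeros01 (gpoly (2*(k+1)+1)). 0 < t \<and> t < 1 \<and> poly (gpoly (2*(k+1)+1)) t = 0 \<and> poly (gpoly (2*(k+1)+1)) (1/t) = 0"
      using Zodd_props by blast
    show "\<forall>t\<in>zeros01 (gpoly (2*k+2)). 0 < t \<and> t < 1 \<and> poly (gpoly (2*k+2)) t = 0 \<and> poly (gpoly (2*k+2)) (1/t) = 0"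
      using Zeven_props by blast
    show "zeros01 (gpoly (2*k+2)) \<inter> zeros01 (gpoly (2*(k+1)+1)) = {}"
    proof (rule ccontr)
      assume "zeros01 (gpoly (2*k+2)) \<inter> zeros01 (gpoly (2*(k+1)+1)) \<noteq> {}"
      then obtain t where t1: "t \<in> zeros01 (gpoly (2*(k+1)+1))" and t2: "t \<in> zeros01 (gpoly (2*k+2))" by blast
      have "cos (real (Suc (2*k+2)) * psi t) = 0" using Zodd_props(5)[OF t1] by simp
      moreover have "cos (real (2*k+2) * psi t) = 0" using Zeven_props(5)[OF t2] by simp
      moreover have "0 \<le> psi t" "psi t \<le> pi" using psi_range[of t] Zodd_props(1)[OF t1] by auto
      ultimately show False by (intro cos_consec[of "2*k+2" "psi t"])
    qed
    show "degree (gpoly (2*k+2)) + degree (gpoly (2*(k+1)+1))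
          \<le> 2 * (card (zeros01 (gpoly (2*k+2))) + card (zeros01 (gpoly (2*(k+1)+1))))"
      unfolding ZC ZB using sC(2) sB(2) deg_g[of k] deg_g[of "k+1"] by simp
  qed
  have i1: "\<forall>i\<in>{1..m-1}. \<beta> i < \<alpha> i \<and> \<alpha> i < \<beta> (i+1)"
  proof
    fix i assume i: "i \<in> {1..m-1}"
    hence i': "1 \<le> i" "i \<le> k" using m by auto
    have "\<alpha> i = phi (ang (2*k+1) i)" using i' al by (simp add: cc_def)
    moreover have "\<beta> i = phi (ang (2*k+2) i)" "\<beta> (i+1) = phi (ang (2*k+2) (i+1))" using i' be by auto
    moreover have "phi (ang (2*k+2) i) < phi (ang (2*k+1) i)"
      using i' by (intro phi_ang_less) (auto simp: algebra_simps)
    moreover have "phi (ang (2*k+1) i) < phi (ang (2*k+2) (i+1))"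
      using i' by (intro phi_ang_less) (auto simp: algebra_simps)
    ultimately show "\<beta> i < \<alpha> i \<and> \<alpha> i < \<beta> (i+1)" by simp
  qed
  have i2: "\<beta> m < mu0 \<and> mu0 < \<beta> (m+1)"
  proof -
    have "\<beta> m = phi (ang (2*k+2) (k+1))" "\<beta> (m+1) = phi (ang (2*k+2) (k+2))" using be m by auto
    moreover have "phi (ang (2*k+2) (k+1)) < mu0" by (rule phi_ang_mu0(1)) auto
    moreover have "mu0 < phi (ang (2*k+2) (k+2))" by (rule phi_ang_mu0(2)) auto
    ultimately show ?thesis by simp
  qed
  have i3: "\<forall>i\<in>{m..2*(m-1)}. \<beta> (i+1) < \<alpha> i \<and> \<alpha> i < \<beta> (i+2)"
  proof
    fix i assume i: "i \<in> {m..2*(m-1)}"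
    hence i': "k+1 \<le> i" "i \<le> 2*k" using m by auto
    have "\<alpha> i = phi (ang (2*k+1) (i+1))" using i' al by (simp add: cc_def)
    moreover have "\<beta> (i+1) = phi (ang (2*k+2) (i+1))" "\<beta> (i+2) = phi (ang (2*k+2) (i+2))" using i' be by auto
    moreover have "phi (ang (2*k+2) (i+1)) < phi (ang (2*k+1) (i+1))"
      using i' by (intro phi_ang_less) (auto simp: algebra_simps)
    moreover have "phi (ang (2*k+1) (i+1)) < phi (ang (2*k+2) (i+2))"
      using i' by (intro phi_ang_less) (auto simp: algebra_simps)
    ultimately show "\<beta> (i+1) < \<alpha> i \<and> \<alpha> i < \<beta> (i+2)" by simp
  qed
  have i4: "\<beta> (2*m) < 1" using be[of "2*k+2"] phi_ang_1[of "2*k+2" "2*k+2"] m by simp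
  have i5: "\<forall>i\<in>{1..m}. \<gamma> i < \<beta> i"
  proof
    fix i assume i: "i \<in> {1..m}"
    hence i': "1 \<le> i" "i \<le> k+1" using m by auto
    have "\<gamma> i = phi (ang (2*k+3) i)" using i' ga by (simp add: cc_def k3)
    moreover have "\<beta> i = phi (ang (2*k+2) i)" using i' be by auto
    moreover have "phi (ang (2*k+3) i) < phi (ang (2*k+2) i)"
      using i' by (intro phi_ang_less) (auto simp: algebra_simps)
    ultimately show "\<gamma> i < \<beta> i" by simp
  qed
  have i6: "\<forall>i\<in>{1..<m}. \<beta> i < \<gamma> (i+1)"
  proof
    fix i assume i: "i \<in> {1..<m}"
    hence i': "1 \<le> i" "i \<le> k" using m by auto
    have "\<gamma> (i+1) = phi (ang (2*k+3) (i+1))" using i' ga by (simp add: cc_def k3)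
    moreover have "\<beta> i = phi (ang (2*k+2) i)" using i' be by auto
    moreover have "phi (ang (2*k+2) i) < phi (ang (2*k+3) (i+1))"
      using i' by (intro phi_ang_less) (auto simp: algebra_simps)
    ultimately show "\<beta> i < \<gamma> (i+1)" by simp
  qed
  have i7: "\<forall>i\<in>{m+1..2*m}. \<beta> i < \<gamma> i"
  proof
    fix i assume i: "i \<in> {m+1..2*m}"
    hence i': "k+2 \<le> i" "i \<le> 2*k+2" using m by auto
    have "\<gamma> i = phi (ang (2*k+3) (i+1))" using i' ga by (simp add: cc_def k3)
    moreover have "\<beta> i = phi (ang (2*k+2) i)" using i' be by auto
    moreover have "phi (ang (2*k+2) i) < phi (ang (2*k+3) (i+1))"
      using i' by (intro phi_ang_less) (auto simp: algebra_simps)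
    ultimately show "\<beta> i < \<gamma> i" by simp
  qed
  have i8: "\<forall>i\<in>{m+1..<2*m}. \<gamma> i < \<beta> (i+1)"
  proof
    fix i assume i: "i \<in> {m+1..<2*m}"
    hence i': "k+2 \<le> i" "i \<le> 2*k+1" using m by auto
    have "\<gamma> i = phi (ang (2*k+3) (i+1))" using i' ga by (simp add: cc_def k3)
    moreover have "\<beta> (i+1) = phi (ang (2*k+2) (i+1))" using i' be by auto
    moreover have "phi (ang (2*k+3) (i+1)) < phi (ang (2*k+2) (i+1))"
      using i' by (intro phi_ang_less) (auto simp: algebra_simps)
    ultimately show "\<gamma> i < \<beta> (i+1)" by simp
  qed
  have i9: "\<gamma> (2*m) < 1"
  proof -
    have "\<gamma> (2*m) = phi (ang (2*k+3) (2*k+3))" using ga[of "2*k+2"] m by (simp add: cc_def k3)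
    thus ?thesis using phi_ang_1[of "2*k+3" "2*k+3"] by simp
  qed
  show ?thesis using cards rs1 rs2 i1 i2 i3 i4 i5 i6 i7 i8 i9 by blast
qed

end
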